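(* Let $G$ be a finite simple graph on $2i$ vertices and $e$ a pair of distinct vertices of $G$. Then $$a(G+e)=a(G)+\sum_{J\in\mathcal{E}\mathcal{C}(G+e)\setminus\mathcal{E}\mathcal{C}(G)}|b(G|_J)|\cdot a\big((G+e)^\ast_J\big).$$
   Context: All graphs are finite simple graphs; $G|_I$ is the induced subgraph on $I\subseteq V(G)$. The signed $a$-number: $sa(\emptyset)=1$ for the null graph; if $G$ has connected components $G_1,\dots,G_\ell$, $sa(G)=\prod_k sa(G_k)$; if $G$ is connected and nonempty, $sa(G)=-\sum_{I\subsetneq V(G)}sa(G|_I)$ when $|V(G)|$ is even and $sa(G)=0$ when $|V(G)|$ is odd. The $a$-number is $a(G)=|sa(G)|$ and the $b$-number is $b(G)=\sum_{I\subseteq V(G)}sa(G|_I)$. $\mathcal{E}\mathcal{C}(G)=\{I\subseteq V(G): G|_I\text{ has no connected component of odd order}\}$. $G+e$ is $G$ with $e$ added as an edge. The reconnected complement $H^\ast_J$ of $J\subseteq V(H)$ is the graph on $V(H)\setminus J$ in which $\{a,b\}$ is an edge iff there is a path from $a$ to $b$ in $H|_{J\cup\{a,b\}}$. *)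

theory Defs
  imports Main
begin

text \<open>Induced subgraphs G|_I are represented by the pair (I, E):
  only edges with both endpoints in I are taken into account.\<close>

definition simple_graph :: "'a set \<Rightarrow> 'a set set \<Rightarrow> bool" where
  "simple_graph V E \<longleftrightarrow> finite V \<and> (\<forall>e\<in>E. \<exists>x y. x \<in> V \<and> y \<in> V \<and> x \<noteq> y \<and> e = {x, y})"

definition adj :: "'a set set \<Rightarrow> 'a set \<Rightarrow> 'a \<Rightarrow> 'a \<Rightarrow> bool" where
  "adj E V x y \<longleftrightarrow> x \<in> V \<and> y \<in> V \<and> x \<noteq> y \<and> {x, y} \<in> E"

definition reach :: "'a set set \<Rightarrow> 'a set \<Rightarrow> 'a \<Rightarrow> 'a \<Rightarrow> bool" where
  "reach E V x y \<longleftrightarrow> x \<in> V \<and> y \<in> V \<and> (adj E V)\<^sup>*\<^sup>* x y"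

definition components :: "'a set set \<Rightarrow> 'a set \<Rightarrow> 'a set set" where
  "components E V = {C. \<exists>v\<in>V. C = {u. reach E V v u}}"

definition connected_graph :: "'a set set \<Rightarrow> 'a set \<Rightarrow> bool" where
  "connected_graph E V \<longleftrightarrow> V \<noteq> {} \<and> (\<forall>x\<in>V. \<forall>y\<in>V. reach E V x y)"

lemma adj_sym: "adj E V x y \<Longrightarrow> adj E V y x"
  unfolding adj_def by (auto simp: insert_commute)

lemma rt_sym: "(adj E V)\<^sup>*\<^sup>* x y \<Longrightarrow> (adj E V)\<^sup>*\<^sup>* y x"
  by (induction rule: rtranclp_induct)
     (auto intro: converse_rtranclp_into_rtranclp adj_sym)

lemma reach_sym: "reach E V x y \<Longrightarrow> reach E V y x"
  unfolding reach_def using rt_sym by metis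

lemma reach_trans: "reach E V x y \<Longrightarrow> reach E V y z \<Longrightarrow> reach E V x z"
  unfolding reach_def by auto

lemma component_psubset:
  assumes "C \<in> components E V" "\<not> connected_graph E V" "V \<noteq> {}"
  shows "C \<subset> V"
proof -
  obtain v where v: "v \<in> V" "C = {u. reach E V v u}" using assms(1) unfolding components_def by blast
  have sub: "C \<subseteq> V" using v unfolding reach_def by auto
  show ?thesis
  proof (rule ccontr)
    assume "\<not> C \<subset> V"
    then have "C = V" using sub by blast
    then have "\<forall>x\<in>V. reach E V v x" using v by auto
    then have "\<forall>x\<in>V. \<forall>y\<in>V. reach E V x y" by (meson reach_sym reach_trans)
    then show False using assms(2,3) unfolding connected_graph_def by blast
  qed
qed

function sa :: "'a set set \<Rightarrow> 'a set \<Rightarrow> int" where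
  "sa E V = (if \<not> finite V then 0
     else if V = {} then 1
     else if connected_graph E V then
       (if even (card V) then - (\<Sum>I\<in>{I. I \<subset> V}. sa E I) else 0)
     else (\<Prod>C\<in>components E V. sa E C))"
  by pat_completeness auto
termination
  apply (relation "measure (\<lambda>(E, V). card V)")
    apply simp
   apply (simp add: psubset_card_mono)
  apply (simp add: psubset_card_mono component_psubset)
  done

declare sa.simps [simp del]

definition a_num :: "'a set set \<Rightarrow> 'a set \<Rightarrow> int" where
  "a_num E V = \<bar>sa E V\<bar>"

definition b_num :: "'a set set \<Rightarrow> 'a set \<Rightarrow> int" where
  "b_num E V = (\<Sum>I\<in>Pow V. sa E I)"

definition EC :: "'a set set \<Rightarrow> 'a set \<Rightarrow> 'a set set" where
  "EC E V = {I. I \<subseteq> V \<and> (\<forall>C\<in>components E I. even (card C))}"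

definition recon_edges :: "'a set set \<Rightarrow> 'a set \<Rightarrow> 'a set \<Rightarrow> 'a set set" where
  "recon_edges E V J = {{x, y} | x y. x \<in> V - J \<and> y \<in> V - J \<and> x \<noteq> y \<and> reach E (J \<union> {x, y}) x y}"

end

theory Submission
  imports Defs
begin

definition sep :: "'a set set \<Rightarrow> 'a set \<Rightarrow> 'a set \<Rightarrow> bool" where
  "sep E A B \<longleftrightarrow> (\<forall>a\<in>A. \<forall>b\<in>B. {a, b} \<notin> E)"

lemma sep_sym: "sep E A B \<Longrightarrow> sep E B A"
  unfolding sep_def by (metis insert_commute)

lemma restrict_path:
  assumes "(adj E W)\<^sup>*\<^sup>* x y" "x \<in> A" "A \<subseteq> W" "sep E A (W - A)"
  shows "(adj E A)\<^sup>*\<^sup>* x y \<and> y \<in> A"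
  using assms(1)
proof (induction rule: rtranclp_induct)
  case base then show ?case using assms by auto
next
  case (step y z)
  have yA: "y \<in> A" and p: "(adj E A)\<^sup>*\<^sup>* x y" using step.IH by auto
  have a: "adj E W y z" using step.hyps(2) .
  then have zW: "z \<in> W" and e: "{y, z} \<in> E" and ne: "y \<noteq> z" unfolding adj_def by auto
  have zA: "z \<in> A"
  proof (rule ccontr)
    assume "z \<notin> A"
    then have "z \<in> W - A" using zW by simp
    then show False using assms(4) yA e unfolding sep_def by blast
  qed
  have "adj E A y z" using yA zA e ne unfolding adj_def by simp
  then have "(adj E A)\<^sup>*\<^sup>* x z" using p by (simp add: rtranclp.rtrancl_into_rtrancl)
  then show ?case using zA by simp
qed

lemma adj_mono: "A \<subseteq> B \<Longrightarrow> E \<subseteq> F \<Longrightarrow> adj E A x y \<Longrightarrow> adj F B x y"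
  unfolding adj_def by auto

lemma rt_mono:
  assumes "A \<subseteq> B" "E \<subseteq> F" "(adj E A)\<^sup>*\<^sup>* x y"
  shows "(adj F B)\<^sup>*\<^sup>* x y"
  using assms(3)
proof (induction rule: rtranclp_induct)
  case base then show ?case by simp
next
  case (step y z)
  have "adj F B y z" using adj_mono[OF assms(1,2) step.hyps(2)] .
  then show ?case using step.IH by (rule rtranclp.rtrancl_into_rtrancl[rotated])
qed

lemma reach_mono: "A \<subseteq> B \<Longrightarrow> E \<subseteq> F \<Longrightarrow> reach E A x y \<Longrightarrow> reach F B x y"
  using rt_mono[of A B E F x y] unfolding reach_def by auto

lemma reach_refl: "x \<in> W \<Longrightarrow> reach E W x x"
  unfolding reach_def by auto

lemma reach_in: "reach E W x y \<Longrightarrow> x \<in> W \<and> y \<in> W"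
  unfolding reach_def by auto

lemma reach_adj: "adj E W x y \<Longrightarrow> reach E W x y"
  unfolding reach_def adj_def by auto

lemma restrict_reach:
  assumes "reach E W x y" "x \<in> A" "A \<subseteq> W" "sep E A (W - A)"
  shows "reach E A x y"
  using restrict_path[of E W x y A] assms unfolding reach_def by auto

lemma comp_sep_aux:
  assumes a: "reach E W x a" and b: "b \<in> W" "\<not> reach E W x b" and e: "{a,b} \<in> E"
  shows False
proof -
  have ne: "a \<noteq> b" using a b by auto
  have aW: "a \<in> W" using reach_in[OF a] by simp
  have "adj E W a b" using aW b ne e unfolding adj_def by simp
  then have "reach E W a b" by (rule reach_adj)
  then have "reach E W x b" using a reach_trans by metis
  then show False using b by simp
qed

lemma comp_sep:
  "sep E {y. reach E W x y} (W - {y. reach E W x y})"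
  unfolding sep_def
proof (intro ballI notI)
  fix a b assume "a \<in> {y. reach E W x y}" "b \<in> W - {y. reach E W x y}" "{a, b} \<in> E"
  then show False using comp_sep_aux[of E W x a b] by simp
qed

lemma comp_sub: "{y. reach E W x y} \<subseteq> W"
  by (auto dest: reach_in)

lemma comp_conn:
  assumes "x \<in> W"
  shows "connected_graph E {y. reach E W x y}"
  unfolding connected_graph_def
proof (intro conjI ballI)
  have "x \<in> {y. reach E W x y}" using reach_refl[OF assms] by simp
  then show "{y. reach E W x y} \<noteq> {}" by auto
  fix a b assume a: "a \<in> {y. reach E W x y}" and b: "b \<in> {y. reach E W x y}"
  have xa: "reach E W x a" and xb: "reach E W x b" using a b by auto
  have "reach E W a b" using reach_trans[OF reach_sym[OF xa] xb] .
  then show "reach E {y. reach E W x y} a b"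
    by (rule restrict_reach[OF _ a comp_sub comp_sep])
qed

lemma conn_components:
  assumes "connected_graph E W" shows "components E W = {W}"
proof -
  have "{y. reach E W x y} = W" if "x \<in> W" for x
  proof
    show "{y. reach E W x y} \<subseteq> W" by (rule comp_sub)
    show "W \<subseteq> {y. reach E W x y}" using assms that unfolding connected_graph_def by auto
  qed
  moreover have "W \<noteq> {}" using assms unfolding connected_graph_def by simp
  ultimately show ?thesis unfolding components_def by auto
qed

lemma not_conn_split:
  assumes "W \<noteq> {}" "\<not> connected_graph E W"
  shows "\<exists>A. A \<noteq> {} \<and> A \<subset> W \<and> sep E A (W - A) \<and> connected_graph E A"
proof -
  obtain x where x: "x \<in> W" using assms by auto
  let ?A = "{y. reach E W x y}"
  have "?A \<in> components E W" unfolding components_def using x by auto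
  then have "?A \<subset> W" using component_psubset[of ?A E W] assms by simp
  moreover have "x \<in> ?A" using reach_refl[OF x] by simp
  moreover note comp_sep[of E W x] comp_conn[OF x]
  ultimately show ?thesis by (intro exI[of _ ?A]) auto
qed

lemma sa_empty: "sa E {} = 1"
  by (subst sa.simps) simp

lemma sa_prod:
  assumes "finite W"
  shows "sa E W = (\<Prod>C\<in>components E W. sa E C)"
proof (cases "W = {}")
  case True
  then show ?thesis by (simp add: sa_empty components_def)
next
  case False
  show ?thesis
  proof (cases "connected_graph E W")
    case True
    then show ?thesis by (simp add: conn_components)
  next
    case c: False
    show ?thesis using assms False c by (subst sa.simps) simp
  qed
qed

lemma sa_conn_odd: "connected_graph E W \<Longrightarrow> odd (card W) \<Longrightarrow> sa E W = 0"
  by (subst sa.simps) (auto simp: connected_graph_def)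

lemma sa_conn_even: "finite W \<Longrightarrow> connected_graph E W \<Longrightarrow> even (card W) \<Longrightarrow>
   sa E W = - (\<Sum>I\<in>{I. I \<subset> W}. sa E I)"
  by (subst sa.simps) (auto simp: connected_graph_def)

lemma components_sep:
  assumes "A \<inter> B = {}" "sep E A B"
  shows "components E (A \<union> B) = components E A \<union> components E B"
proof -
  have dA: "(A \<union> B) - A = B" using assms(1) by blast
  have dB: "(A \<union> B) - B = A" using assms(1) by blast
  have sA: "sep E A ((A \<union> B) - A)" using assms(2) dA by simp
  have sB: "sep E B ((A \<union> B) - B)" using sep_sym[OF assms(2)] dB by simp
  have ra: "reach E (A \<union> B) x y \<longleftrightarrow> reach E A x y" if "x \<in> A" for x y
  proof
    assume r: "reach E (A \<union> B) x y"
    show "reach E A x y" using restrict_reach[OF r that _ sA] by simp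
  next
    assume "reach E A x y" then show "reach E (A \<union> B) x y" using reach_mono[of A "A \<union> B" E E] by simp
  qed
  have rb: "reach E (A \<union> B) x y \<longleftrightarrow> reach E B x y" if "x \<in> B" for x y
  proof
    assume r: "reach E (A \<union> B) x y"
    show "reach E B x y" using restrict_reach[OF r that _ sB] by simp
  next
    assume "reach E B x y" then show "reach E (A \<union> B) x y" using reach_mono[of B "A \<union> B" E E] by simp
  qed
  have eqA: "{y. reach E (A \<union> B) x y} = {y. reach E A x y}" if "x \<in> A" for x
    by (simp add: ra[OF that])
  have eqB: "{y. reach E (A \<union> B) x y} = {y. reach E B x y}" if "x \<in> B" for x
    by (simp add: rb[OF that])
  show ?thesis unfolding components_def
  proof (rule set_eqI, rule iffI)
    fix C assume "C \<in> {C. \<exists>v\<in>A \<union> B. C = {u. reach E (A \<union> B) v u}}"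
    then obtain v where v: "v \<in> A \<union> B" "C = {u. reach E (A \<union> B) v u}" by blast
    show "C \<in> {C. \<exists>v\<in>A. C = {u. reach E A v u}} \<union> {C. \<exists>v\<in>B. C = {u. reach E B v u}}"
    proof (cases "v \<in> A")
      case True then show ?thesis using v eqA[OF True] by auto
    next
      case False then have "v \<in> B" using v by simp
      then show ?thesis using v eqB[OF \<open>v \<in> B\<close>] by auto
    qed
  next
    fix C assume "C \<in> {C. \<exists>v\<in>A. C = {u. reach E A v u}} \<union> {C. \<exists>v\<in>B. C = {u. reach E B v u}}"
    then consider v where "v \<in> A" "C = {u. reach E A v u}" | v where "v \<in> B" "C = {u. reach E B v u}" by blast
    then show "C \<in> {C. \<exists>v\<in>A \<union> B. C = {u. reach E (A \<union> B) v u}}"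
    proof cases
      case 1 then show ?thesis using eqA[OF 1(1)] by auto
    next
      case 2 then show ?thesis using eqB[OF 2(1)] by auto
    qed
  qed
qed

lemma comp_nonempty: "C \<in> components E W \<Longrightarrow> C \<noteq> {}"
  unfolding components_def using reach_refl by fastforce

lemma comp_subset: "C \<in> components E W \<Longrightarrow> C \<subseteq> W"
  unfolding components_def using comp_sub by fastforce

lemma finite_components: "finite W \<Longrightarrow> finite (components E W)"
proof -
  assume "finite W"
  moreover have "components E W \<subseteq> Pow W" using comp_subset by blast
  ultimately show ?thesis by (meson finite_Pow_iff finite_subset)
qed

lemma sa_sep:
  assumes "finite A" "finite B" "A \<inter> B = {}" "sep E A B"
  shows "sa E (A \<union> B) = sa E A * sa E B"
proof -
  have d: "components E A \<inter> components E B = {}"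
  proof (rule ccontr)
    assume "components E A \<inter> components E B \<noteq> {}"
    then obtain C where "C \<in> components E A" "C \<in> components E B" by blast
    then have "C \<noteq> {}" "C \<subseteq> A" "C \<subseteq> B" using comp_nonempty comp_subset by metis+
    then show False using assms(3) by blast
  qed
  have "sa E (A \<union> B) = (\<Prod>C\<in>components E (A \<union> B). sa E C)"
    using assms by (simp add: sa_prod)
  also have "\<dots> = (\<Prod>C\<in>components E A \<union> components E B. sa E C)"
    using components_sep[OF assms(3,4)] by simp
  also have "\<dots> = (\<Prod>C\<in>components E A. sa E C) * (\<Prod>C\<in>components E B. sa E C)"
    using prod.union_disjoint[OF finite_components[OF assms(1)] finite_components[OF assms(2)] d] .
  also have "\<dots> = sa E A * sa E B" using assms by (simp add: sa_prod)
  finally show ?thesis .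
qed

lemma sa_odd: "finite W \<Longrightarrow> odd (card W) \<Longrightarrow> sa E W = 0"
proof (induction "card W" arbitrary: W rule: less_induct)
  case less
  have ne: "W \<noteq> {}" using less.prems by auto
  show ?case
  proof (cases "connected_graph E W")
    case True show ?thesis using sa_conn_odd[OF True less.prems(2)] by simp
  next
    case False
    obtain A where A: "A \<noteq> {}" "A \<subset> W" "sep E A (W - A)" "connected_graph E A"
      using not_conn_split[OF ne False] by blast
    have fA: "finite A" using A(2) less.prems(1) finite_subset by auto
    have fB: "finite (W - A)" using less.prems(1) by simp
    have U: "A \<union> (W - A) = W" using A(2) by auto
    have s: "sa E W = sa E A * sa E (W - A)"
      using sa_sep[OF fA fB _ A(3)] U by simp
    have c: "card W = card A + card (W - A)"
      using card_Un_disjoint[OF fA fB] U by simp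
    have lA: "card A < card W" using psubset_card_mono[OF less.prems(1) A(2)] .
    have "card A > 0" using A(1) fA by (simp add: card_gt_0_iff)
    then have lB: "card (W - A) < card W" using c by simp
    show ?thesis
    proof (cases "odd (card A)")
      case True
      then have "sa E A = 0" using less.hyps[OF lA fA] by simp
      then show ?thesis using s by simp
    next
      case False
      then have "odd (card (W - A))" using c less.prems(2) by simp
      then have "sa E (W - A) = 0" using less.hyps[OF lB fB] by simp
      then show ?thesis using s by simp
    qed
  qed
qed

lemma b_empty: "b_num E {} = 1"
  unfolding b_num_def by (simp add: sa_empty)

lemma b_sep:
  assumes "finite A" "finite B" "A \<inter> B = {}" "sep E A B"
  shows "b_num E (A \<union> B) = b_num E A * b_num E B"
proof -
  have "b_num E (A \<union> B) = (\<Sum>p\<in>Pow A \<times> Pow B. sa E (fst p) * sa E (snd p))"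
    unfolding b_num_def
  proof (rule sum.reindex_bij_witness[where j = "\<lambda>I. (I \<inter> A, I \<inter> B)" and i = "\<lambda>p. fst p \<union> snd p"])
    fix I assume "I \<in> Pow (A \<union> B)"
    then show "fst (I \<inter> A, I \<inter> B) \<union> snd (I \<inter> A, I \<inter> B) = I" by auto
    show "(I \<inter> A, I \<inter> B) \<in> Pow A \<times> Pow B" by auto
    have fX: "finite (I \<inter> A)" using assms(1) by simp
    have fY: "finite (I \<inter> B)" using assms(2) by simp
    have sp: "sep E (I \<inter> A) (I \<inter> B)" using assms(4) unfolding sep_def by blast
    have "sa E ((I \<inter> A) \<union> (I \<inter> B)) = sa E (I \<inter> A) * sa E (I \<inter> B)"
      using sa_sep[OF fX fY _ sp] assms(3) by blast
    moreover have "(I \<inter> A) \<union> (I \<inter> B) = I" using \<open>I \<in> Pow (A \<union> B)\<close> by auto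
    ultimately show "sa E (fst (I \<inter> A, I \<inter> B)) * sa E (snd (I \<inter> A, I \<inter> B)) = sa E I" by simp
  next
    fix p assume "p \<in> Pow A \<times> Pow B"
    then show "((fst p \<union> snd p) \<inter> A, (fst p \<union> snd p) \<inter> B) = p"
      using assms(3) by (cases p) auto
    show "fst p \<union> snd p \<in> Pow (A \<union> B)" using \<open>p \<in> Pow A \<times> Pow B\<close> by auto
  qed
  also have "\<dots> = (\<Sum>X\<in>Pow A. \<Sum>Y\<in>Pow B. sa E X * sa E Y)"
    by (simp add: sum.cartesian_product case_prod_beta)
  also have "\<dots> = b_num E A * b_num E B"
    unfolding b_num_def by (simp add: sum_product)
  finally show ?thesis .
qed

lemma fin_psub: "finite W \<Longrightarrow> finite {I. I \<subset> W}"
  by (rule finite_subset[of _ "Pow W"]) auto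

lemma Pow_split: "Pow W = insert W {I. I \<subset> W}"
  by auto

lemma b_conn_even:
  assumes "finite W" "connected_graph E W" "even (card W)"
  shows "b_num E W = 0"
proof -
  have f: "finite {I. I \<subset> W}" using fin_psub[OF assms(1)] .
  have "b_num E W = sa E W + (\<Sum>I\<in>{I. I \<subset> W}. sa E I)"
    unfolding b_num_def Pow_split using sum.insert[OF f, of W "sa E"] by simp
  then show ?thesis using sa_conn_even[OF assms] by simp
qed

lemma b_split_sum: "finite W \<Longrightarrow> b_num E W = sa E W + (\<Sum>I\<in>{I. I \<subset> W}. sa E I)"
  unfolding b_num_def Pow_split by (simp add: sum.insert fin_psub)

lemma sa_cong:
  "finite W \<Longrightarrow> (\<And>x y. x \<in> W \<Longrightarrow> y \<in> W \<Longrightarrow> x \<noteq> y \<Longrightarrow> ({x,y} \<in> E1 \<longleftrightarrow> {x,y} \<in> E2))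
   \<Longrightarrow> sa E1 W = sa E2 W"
proof (induction "card W" arbitrary: W rule: less_induct)
  case less
  have adjeq: "adj E1 W = adj E2 W"
    using less.prems(2) by (intro ext) (auto simp: adj_def)
  have reacheq: "reach E1 W = reach E2 W"
    by (intro ext) (simp add: reach_def adjeq)
  have compeq: "components E1 W = components E2 W"
    unfolding components_def by (simp add: reacheq)
  have conneq: "connected_graph E1 W = connected_graph E2 W"
    unfolding connected_graph_def by (simp add: reacheq)
  have IH: "sa E1 I = sa E2 I" if "I \<subset> W" for I
  proof -
    have "card I < card W" using psubset_card_mono[OF less.prems(1) that] .
    moreover have "finite I" using that less.prems(1) finite_subset by auto
    ultimately show ?thesis using less.hyps[of I] less.prems(2) that by blast
  qed
  show ?case
  proof (cases "W = {}")
    case True then show ?thesis by (simp add: sa_empty)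
  next
    case ne: False
    show ?thesis
    proof (cases "connected_graph E1 W")
      case True
      have "(\<Sum>I\<in>{I. I \<subset> W}. sa E1 I) = (\<Sum>I\<in>{I. I \<subset> W}. sa E2 I)"
        using IH by (intro sum.cong) auto
      then show ?thesis using True conneq less.prems(1) ne
        by (subst (1 2) sa.simps) simp
    next
      case False
      have "(\<Prod>C\<in>components E1 W. sa E1 C) = (\<Prod>C\<in>components E2 W. sa E2 C)"
        unfolding compeq[symmetric]
        using IH component_psubset[OF _ False ne] by (intro prod.cong) auto
      then show ?thesis using False conneq less.prems(1) ne
        by (subst (1 2) sa.simps) simp
    qed
  qed
qed

lemma rt_in: "(adj E A)\<^sup>*\<^sup>* a b \<Longrightarrow> a \<in> A \<Longrightarrow> b \<in> A"
  by (induction rule: rtranclp_induct) (auto simp: adj_def)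

definition recE :: "'a set set \<Rightarrow> 'a set \<Rightarrow> 'a set set" where
  "recE H J = {{x, y} | x y. x \<notin> J \<and> y \<notin> J \<and> x \<noteq> y \<and> reach H (J \<union> {x, y}) x y}"

lemma recE_iff:
  assumes "x \<notin> J" "y \<notin> J" "x \<noteq> y"
  shows "{x, y} \<in> recE H J \<longleftrightarrow> reach H (J \<union> {x, y}) x y"
proof
  assume "{x, y} \<in> recE H J"
  then obtain a b where ab: "{x, y} = {a, b}" "reach H (J \<union> {a, b}) a b"
    unfolding recE_def by blast
  from ab(1) have "(x = a \<and> y = b) \<or> (x = b \<and> y = a)" by (simp add: doubleton_eq_iff)
  then show "reach H (J \<union> {x, y}) x y"
  proof
    assume "x = a \<and> y = b" then show ?thesis using ab(2) by simp
  next
    assume h: "x = b \<and> y = a"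
    have "reach H (J \<union> {a, b}) b a" using reach_sym[OF ab(2)] .
    moreover have "{a, b} = {b, a}" by (simp add: insert_commute)
    ultimately show ?thesis using h by simp
  qed
next
  assume "reach H (J \<union> {x, y}) x y"
  then show "{x, y} \<in> recE H J" unfolding recE_def using assms by blast
qed

lemma recon_iff:
  assumes "x \<in> V - J" "y \<in> V - J" "x \<noteq> y"
  shows "{x, y} \<in> recon_edges H V J \<longleftrightarrow> reach H (J \<union> {x, y}) x y"
proof
  assume "{x, y} \<in> recon_edges H V J"
  then obtain a b where ab: "{x, y} = {a, b}" "reach H (J \<union> {a, b}) a b"
    unfolding recon_edges_def by blast
  from ab(1) have "(x = a \<and> y = b) \<or> (x = b \<and> y = a)" by (simp add: doubleton_eq_iff)
  then show "reach H (J \<union> {x, y}) x y"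
  proof
    assume "x = a \<and> y = b" then show ?thesis using ab(2) by simp
  next
    assume h: "x = b \<and> y = a"
    have "reach H (J \<union> {a, b}) b a" using reach_sym[OF ab(2)] .
    moreover have "{a, b} = {b, a}" by (simp add: insert_commute)
    ultimately show ?thesis using h by simp
  qed
next
  assume "reach H (J \<union> {x, y}) x y"
  then show "{x, y} \<in> recon_edges H V J" unfolding recon_edges_def using assms by blast
qed

lemma recon_sa:
  assumes "finite V"
  shows "sa (recon_edges H V J) (V - J) = sa (recE H J) (V - J)"
proof (rule sa_cong)
  show "finite (V - J)" using assms by simp
  fix x y assume "x \<in> V - J" "y \<in> V - J" "x \<noteq> y"
  then show "{x, y} \<in> recon_edges H V J \<longleftrightarrow> {x, y} \<in> recE H J"
    using recon_iff[of x V J y H] recE_iff[of x J y H] by simp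
qed

lemma recE_sep:
  assumes "K \<subseteq> W" "sep H K (W - K)" "J \<subseteq> K"
  shows "sep (recE H J) (K - J) (W - K)"
  unfolding sep_def
proof (intro ballI notI)
  fix a b assume a: "a \<in> K - J" and b: "b \<in> W - K" and e: "{a, b} \<in> recE H J"
  have ne: "a \<noteq> b" using a b by auto
  have bJ: "b \<notin> J" using b assms(3) by auto
  have r: "reach H (J \<union> {a, b}) a b" using recE_iff[of a J b H] a bJ ne e by simp
  have s: "sep H (J \<union> {a}) ((J \<union> {a, b}) - (J \<union> {a}))"
    using assms(2) a b assms(3) unfolding sep_def by blast
  have "reach H (J \<union> {a}) a b"
    using restrict_reach[OF r _ _ s] by blast
  then have "b \<in> J \<union> {a}" using reach_in by metis
  then show False using bJ ne by simp
qed

lemma recE_out: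
  assumes "K \<subseteq> W" "sep H K (W - K)" "J \<subseteq> K" "x \<in> W - K" "y \<in> W - K" "x \<noteq> y"
  shows "{x, y} \<in> recE H J \<longleftrightarrow> {x, y} \<in> H"
proof
  have xJ: "x \<notin> J" "y \<notin> J" using assms by auto
  assume "{x, y} \<in> recE H J"
  then have r: "reach H (J \<union> {x, y}) x y" using recE_iff[of x J y H] xJ assms(6) by simp
  then have "(adj H (J \<union> {x, y}))\<^sup>*\<^sup>* x y" unfolding reach_def by simp
  then show "{x, y} \<in> H"
  proof (rule converse_rtranclpE)
    assume "x = y" then show ?thesis using assms(6) by simp
  next
    fix z assume a: "adj H (J \<union> {x, y}) x z"
    then have z: "z \<in> J \<union> {x, y}" "z \<noteq> x" "{x, z} \<in> H" unfolding adj_def by auto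
    show ?thesis
    proof (cases "z = y")
      case True then show ?thesis using z by simp
    next
      case False
      then have "z \<in> K" using z assms(3) by auto
      then have "{z, x} \<notin> H" using assms(2,4) unfolding sep_def by blast
      then show ?thesis using z by (simp add: insert_commute)
    qed
  qed
next
  have xJ: "x \<notin> J" "y \<notin> J" using assms by auto
  assume "{x, y} \<in> H"
  then have "adj H (J \<union> {x, y}) x y" unfolding adj_def using assms(6) by simp
  then have "reach H (J \<union> {x, y}) x y" by (rule reach_adj)
  then show "{x, y} \<in> recE H J" using recE_iff[of x J y H] xJ assms(6) by simp
qed

lemma recE_conn_aux:
  assumes "(adj H W)\<^sup>*\<^sup>* x z" "x \<in> W - J" "J \<subseteq> W"
  shows "\<exists>w \<in> W - J. reach (recE H J) (W - J) x w \<and> (adj H (J \<union> {w}))\<^sup>*\<^sup>* w z"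
  using assms(1)
proof (induction rule: rtranclp_induct)
  case base
  show ?case using assms(2) reach_refl[OF assms(2)] by blast
next
  case (step z z')
  obtain w where w: "w \<in> W - J" "reach (recE H J) (W - J) x w" "(adj H (J \<union> {w}))\<^sup>*\<^sup>* w z"
    using step.IH by blast
  have zin: "z \<in> J \<union> {w}" using rt_in[OF w(3)] by simp
  have a: "adj H W z z'" using step.hyps(2) .
  then have z'W: "z' \<in> W" and e: "{z, z'} \<in> H" and nzz: "z \<noteq> z'" unfolding adj_def by auto
  show ?case
  proof (cases "z' \<in> J")
    case True
    have "adj H (J \<union> {w}) z z'" using zin True e nzz unfolding adj_def by simp
    then have "(adj H (J \<union> {w}))\<^sup>*\<^sup>* w z'" using w(3) by (simp add: rtranclp.rtrancl_into_rtrancl)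
    then show ?thesis using w(1,2) by blast
  next
    case False
    then have z'in: "z' \<in> W - J" using z'W by simp
    show ?thesis
    proof (cases "z' = w")
      case True
      then show ?thesis using w(1,2) by blast
    next
      case nw: False
      have p1: "(adj H (J \<union> {w, z'}))\<^sup>*\<^sup>* w z"
        using rt_mono[OF _ _ w(3), of "J \<union> {w, z'}" H] by auto
      have "adj H (J \<union> {w, z'}) z z'" using zin e nzz unfolding adj_def by auto
      then have "(adj H (J \<union> {w, z'}))\<^sup>*\<^sup>* w z'" using p1 by (simp add: rtranclp.rtrancl_into_rtrancl)
      then have "reach H (J \<union> {w, z'}) w z'" unfolding reach_def by simp
      then have "{w, z'} \<in> recE H J" using recE_iff[of w J z' H] w(1) z'in nw by auto
      then have "adj (recE H J) (W - J) w z'" using w(1) z'in nw unfolding adj_def by simp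
      then have "reach (recE H J) (W - J) x z'" using w(2) reach_trans reach_adj by metis
      moreover have "(adj H (J \<union> {z'}))\<^sup>*\<^sup>* z' z'" by simp
      ultimately show ?thesis using z'in by blast
    qed
  qed
qed

lemma recE_conn:
  assumes "connected_graph H W" "J \<subseteq> W" "W - J \<noteq> {}"
  shows "connected_graph (recE H J) (W - J)"
  unfolding connected_graph_def
proof (intro conjI ballI)
  show "W - J \<noteq> {}" using assms(3) .
  fix x y assume x: "x \<in> W - J" and y: "y \<in> W - J"
  have "reach H W x y" using assms(1) x y unfolding connected_graph_def by simp
  then have "(adj H W)\<^sup>*\<^sup>* x y" unfolding reach_def by simp
  then obtain w where w: "w \<in> W - J" "reach (recE H J) (W - J) x w" "(adj H (J \<union> {w}))\<^sup>*\<^sup>* w y"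
    using recE_conn_aux[OF _ x assms(2)] by blast
  have "y \<in> J \<union> {w}" using rt_in[OF w(3)] by simp
  then have "y = w" using y by auto
  then show "reach (recE H J) (W - J) x y" using w(2) by simp
qed

definition PP :: "'a set set \<Rightarrow> 'a \<Rightarrow> 'a \<Rightarrow> 'a set \<Rightarrow> bool" where
  "PP E u v J \<longleftrightarrow> u \<in> J \<and> v \<in> J \<and> connected_graph (insert {u, v} E) J \<and> \<not> connected_graph E J"

lemma reach_uv_aux:
  assumes "(adj (insert {u, v} E) J)\<^sup>*\<^sup>* u y" "u \<in> J" "v \<in> J"
  shows "reach E J u y \<or> reach E J v y"
  using assms(1)
proof (induction rule: rtranclp_induct)
  case base then show ?case using reach_refl[OF assms(2)] by simp
next
  case (step z z')
  have a: "adj (insert {u, v} E) J z z'" using step.hyps(2) .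
  then have zJ: "z \<in> J" "z' \<in> J" "z \<noteq> z'" "{z, z'} \<in> insert {u, v} E" unfolding adj_def by auto
  show ?case
  proof (cases "{z, z'} = {u, v}")
    case True
    then have "z' = u \<or> z' = v" by (auto simp: doubleton_eq_iff)
    then show ?thesis using reach_refl[OF assms(2)] reach_refl[OF assms(3)] by auto
  next
    case False
    then have "{z, z'} \<in> E" using zJ(4) by simp
    then have "reach E J z z'" using zJ unfolding reach_def adj_def by auto
    then show ?thesis using step.IH reach_trans by metis
  qed
qed

lemma dec:
  assumes "finite J" "PP E u v J"
  defines "A \<equiv> {y. reach E J u y}"
  shows "u \<in> A" "v \<in> J - A" "A \<subseteq> J" "sep E A (J - A)" "connected_graph E A"
    "connected_graph E (J - A)"
proof -
  have uJ: "u \<in> J" and vJ: "v \<in> J" and cH: "connected_graph (insert {u, v} E) J"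
    and nc: "\<not> connected_graph E J" using assms(2) unfolding PP_def by auto
  have all: "reach E J u y \<or> reach E J v y" if "y \<in> J" for y
  proof -
    have "reach (insert {u, v} E) J u y" using cH uJ that unfolding connected_graph_def by simp
    then have "(adj (insert {u, v} E) J)\<^sup>*\<^sup>* u y" unfolding reach_def by simp
    then show ?thesis using reach_uv_aux uJ vJ by metis
  qed
  show "u \<in> A" unfolding A_def using reach_refl[OF uJ] by simp
  show sub: "A \<subseteq> J" unfolding A_def by (rule comp_sub)
  show "sep E A (J - A)" unfolding A_def by (rule comp_sep)
  show "connected_graph E A" unfolding A_def by (rule comp_conn[OF uJ])
  have nuv: "\<not> reach E J u v"
  proof
    assume uv: "reach E J u v"
    have "reach E J u y" if "y \<in> J" for y
      using all[OF that] uv reach_trans by metis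
    then have "\<forall>x\<in>J. \<forall>y\<in>J. reach E J x y" using reach_sym reach_trans by metis
    then show False using nc uJ unfolding connected_graph_def by auto
  qed
  then show vA: "v \<in> J - A" unfolding A_def using vJ by simp
  have dd: "J - (J - A) = A" using sub by auto
  have s2: "sep E (J - A) (J - (J - A))"
    unfolding dd unfolding A_def by (rule sep_sym[OF comp_sep])
  show "connected_graph E (J - A)"
    unfolding connected_graph_def
  proof (intro conjI ballI)
    show "J - A \<noteq> {}" using vA by auto
    fix y z assume y: "y \<in> J - A" and z: "z \<in> J - A"
    have vy: "reach E J v y" using all[of y] y unfolding A_def by auto
    have vz: "reach E J v z" using all[of z] z unfolding A_def by auto
    have "reach E J y z" using reach_trans[OF reach_sym[OF vy] vz] .
    then show "reach E (J - A) y z" using restrict_reach[OF _ y _ s2] by blast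
  qed
qed

lemma b_dec:
  assumes "finite J" "PP E u v J"
  shows "b_num E J = b_num E {y. reach E J u y} * b_num E (J - {y. reach E J u y})"
proof -
  let ?A = "{y. reach E J u y}"
  have "?A \<subseteq> J" using dec[OF assms] by simp
  then have U: "?A \<union> (J - ?A) = J" by auto
  have fA: "finite ?A" using \<open>?A \<subseteq> J\<close> assms(1) finite_subset by auto
  have "b_num E (?A \<union> (J - ?A)) = b_num E ?A * b_num E (J - ?A)"
    using b_sep[OF fA _ _ dec(4)[OF assms]] assms(1) by auto
  then show ?thesis using U by simp
qed

lemma b_dec_odd:
  assumes "finite J" "PP E u v J" "odd (card J)"
  shows "b_num E J = 0"
proof -
  let ?A = "{y. reach E J u y}"
  have sub: "?A \<subseteq> J" using dec[OF assms(1,2)] by simp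
  have fA: "finite ?A" using sub assms(1) finite_subset by auto
  have c: "card J = card ?A + card (J - ?A)"
    using card_Un_disjoint[OF fA, of "J - ?A"] assms(1) sub by (simp add: Un_absorb1)
  show ?thesis
  proof (cases "even (card ?A)")
    case True
    then have "b_num E ?A = 0" using b_conn_even[OF fA dec(5)[OF assms(1,2)]] by simp
    then show ?thesis using b_dec[OF assms(1,2)] by simp
  next
    case False
    then have "even (card (J - ?A))" using c assms(3) by simp
    then have "b_num E (J - ?A) = 0" using b_conn_even[OF _ dec(6)[OF assms(1,2)]] assms(1) by simp
    then show ?thesis using b_dec[OF assms(1,2)] by simp
  qed
qed

lemma sum_Pow_split:
  assumes "finite W"
  shows "(\<Sum>I\<in>Pow W. f I) = f W + (\<Sum>I\<in>{I. I \<subset> W}. f I)"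
  unfolding Pow_split using fin_psub[OF assms] by (simp add: sum.insert)

lemma fin_S: "finite W \<Longrightarrow> finite {J. J \<subseteq> W \<and> Q J}"
  by (rule finite_subset[of _ "Pow W"]) auto

lemma sum_T:
  fixes f :: "'a set \<Rightarrow> int"
  assumes "finite W"
  shows "(\<Sum>I\<in>Pow W. \<Sum>J\<in>{J. J \<subseteq> I \<and> Q J}. f J * g J (I - J))
       = (\<Sum>J\<in>{J. J \<subseteq> W \<and> Q J}. f J * (\<Sum>K\<in>Pow (W - J). g J K))"
proof -
  let ?S = "{J. J \<subseteq> W \<and> Q J}"
  have "(\<Sum>I\<in>Pow W. \<Sum>J\<in>{J. J \<subseteq> I \<and> Q J}. f J * g J (I - J))
      = (\<Sum>I\<in>Pow W. \<Sum>J\<in>{J. J \<in> ?S \<and> J \<subseteq> I}. f J * g J (I - J))"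
  proof (rule sum.cong)
    fix I assume "I \<in> Pow W"
    then have "{J. J \<subseteq> I \<and> Q J} = {J. J \<in> ?S \<and> J \<subseteq> I}" by auto
    then show "(\<Sum>J\<in>{J. J \<subseteq> I \<and> Q J}. f J * g J (I - J)) = (\<Sum>J\<in>{J. J \<in> ?S \<and> J \<subseteq> I}. f J * g J (I - J))"
      by simp
  qed simp
  also have "\<dots> = (\<Sum>J\<in>?S. \<Sum>I\<in>{I. I \<in> Pow W \<and> J \<subseteq> I}. f J * g J (I - J))"
    by (rule sum.swap_restrict) (simp_all add: assms fin_S)
  also have "\<dots> = (\<Sum>J\<in>?S. f J * (\<Sum>K\<in>Pow (W - J). g J K))"
  proof (rule sum.cong)
    fix J assume J: "J \<in> ?S"
    have "(\<Sum>I\<in>{I. I \<in> Pow W \<and> J \<subseteq> I}. g J (I - J)) = (\<Sum>K\<in>Pow (W - J). g J K)"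
    proof (rule sum.reindex_bij_witness[where j = "\<lambda>I. I - J" and i = "\<lambda>K. K \<union> J"])
      fix I assume "I \<in> {I. I \<in> Pow W \<and> J \<subseteq> I}"
      then show "I - J \<union> J = I" "I - J \<in> Pow (W - J)" "g J (I - J) = g J (I - J)" by auto
    next
      fix K assume "K \<in> Pow (W - J)"
      then show "K \<union> J - J = K" "K \<union> J \<in> {I. I \<in> Pow W \<and> J \<subseteq> I}" using J by auto
    qed
    then show "(\<Sum>I\<in>{I. I \<in> Pow W \<and> J \<subseteq> I}. f J * g J (I - J)) = f J * (\<Sum>K\<in>Pow (W - J). g J K)"
      by (simp add: sum_distrib_left[symmetric])
  qed simp
  finally show ?thesis .
qed

lemma card_diff_parity:
  assumes "finite W" "J \<subseteq> W"
  shows "card W = card J + card (W - J)"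
  using assms by (metis card_Un_disjoint Diff_disjoint Un_Diff_cancel2 Un_absorb2 finite_Diff finite_subset sup_commute)

lemma main:
  assumes H: "H = insert {u, v} E" and uv: "u \<noteq> v"
  shows "finite W \<Longrightarrow> sa H W - sa E W =
    - (\<Sum>J\<in>{J. J \<subseteq> W \<and> PP E u v J}. b_num E J * sa (recE H J) (W - J))"
proof (induction "card W" arbitrary: W rule: less_induct)
  case less
  have fW: "finite W" using less.prems .
  have EH: "E \<subseteq> H" using H by auto
  have uvH: "{u, v} \<in> H" using H by simp
  consider (out) "u \<notin> W \<or> v \<notin> W" | (disc) "u \<in> W" "v \<in> W" "\<not> connected_graph H W"
    | (odd) "u \<in> W" "v \<in> W" "connected_graph H W" "odd (card W)"
    | (even) "u \<in> W" "v \<in> W" "connected_graph H W" "even (card W)" by blast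
  then show ?case
  proof cases
    case out
    have sHE: "sa H W = sa E W"
    proof (rule sa_cong[OF fW])
      fix x y assume "x \<in> W" "y \<in> W" "x \<noteq> y"
      then have "{x, y} \<noteq> {u, v}" using out by (auto simp: doubleton_eq_iff)
      then show "{x, y} \<in> H \<longleftrightarrow> {x, y} \<in> E" using H by simp
    qed
    have e: "{J. J \<subseteq> W \<and> PP E u v J} = {}" using out unfolding PP_def by auto
    show ?thesis unfolding e sHE by simp
  next
    case disc
    let ?K = "{y. reach H W u y}"
    have Kc: "?K \<in> components H W" unfolding components_def using disc by auto
    have KW: "?K \<subset> W" using component_psubset[OF Kc disc(3)] disc by auto
    have sK: "sep H ?K (W - ?K)" by (rule comp_sep)
    have sKE: "sep E ?K (W - ?K)" using sK EH unfolding sep_def by blast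
    have uK: "u \<in> ?K" using reach_refl disc by fastforce
    have fK: "finite ?K" using KW fW finite_subset by auto
    have fR: "finite (W - ?K)" using fW by simp
    have U: "?K \<union> (W - ?K) = W" using KW by auto
    have sH: "sa H W = sa H ?K * sa H (W - ?K)"
      using sa_sep[OF fK fR _ sK] U by simp
    have sE: "sa E W = sa E ?K * sa E (W - ?K)"
      using sa_sep[OF fK fR _ sKE] U by simp
    have cR: "sa H (W - ?K) = sa E (W - ?K)"
    proof (rule sa_cong[OF fR])
      fix x y assume "x \<in> W - ?K" "y \<in> W - ?K" "x \<noteq> y"
      then have "{x, y} \<noteq> {u, v}" using uK by (auto simp: doubleton_eq_iff)
      then show "{x, y} \<in> H \<longleftrightarrow> {x, y} \<in> E" using H by simp
    qed
    have IH: "sa H ?K - sa E ?K =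
      - (\<Sum>J\<in>{J. J \<subseteq> ?K \<and> PP E u v J}. b_num E J * sa (recE H J) (?K - J))"
      using less.hyps[OF psubset_card_mono[OF fW KW] fK] .
    have SS: "{J. J \<subseteq> W \<and> PP E u v J} = {J. J \<subseteq> ?K \<and> PP E u v J}"
    proof (intro set_eqI iffI)
      fix J assume J: "J \<in> {J. J \<subseteq> W \<and> PP E u v J}"
      have "J \<subseteq> ?K"
      proof
        fix y assume y: "y \<in> J"
        have "reach H J u y" using J y H unfolding PP_def connected_graph_def by auto
        then have "reach H W u y" using reach_mono[of J W H H] J by auto
        then show "y \<in> ?K" by simp
      qed
      then show "J \<in> {J. J \<subseteq> ?K \<and> PP E u v J}" using J by simp
    next
      fix J assume "J \<in> {J. J \<subseteq> ?K \<and> PP E u v J}"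
      then show "J \<in> {J. J \<subseteq> W \<and> PP E u v J}" using KW by auto
    qed
    have trm: "sa (recE H J) (W - J) = sa (recE H J) (?K - J) * sa E (W - ?K)"
      if J: "J \<subseteq> ?K" for J
    proof -
      have sp: "sep (recE H J) (?K - J) (W - ?K)"
        using recE_sep[OF _ sK J] KW by auto
      have U2: "(?K - J) \<union> (W - ?K) = W - J" using KW J by auto
      have "sa (recE H J) (W - J) = sa (recE H J) (?K - J) * sa (recE H J) (W - ?K)"
        using sa_sep[OF _ fR _ sp] fK U2 by auto
      moreover have "sa (recE H J) (W - ?K) = sa H (W - ?K)"
      proof (rule sa_cong[OF fR])
        fix x y assume "x \<in> W - ?K" "y \<in> W - ?K" "x \<noteq> y"
        then show "{x, y} \<in> recE H J \<longleftrightarrow> {x, y} \<in> H"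
          using recE_out[OF _ sK J] KW by auto
      qed
      ultimately show ?thesis using cR by simp
    qed
    have "sa H W - sa E W = (sa H ?K - sa E ?K) * sa E (W - ?K)"
      using sH sE cR by (simp add: algebra_simps)
    also have "\<dots> = - (\<Sum>J\<in>{J. J \<subseteq> ?K \<and> PP E u v J}. b_num E J * sa (recE H J) (?K - J) * sa E (W - ?K))"
      unfolding IH by (simp add: sum_distrib_right)
    also have "\<dots> = - (\<Sum>J\<in>{J. J \<subseteq> ?K \<and> PP E u v J}. b_num E J * sa (recE H J) (W - J))"
      using trm by (simp add: mult.assoc)
    finally show ?thesis unfolding SS .
  next
    case odd
    have "sa H W = 0" "sa E W = 0" using sa_odd[OF fW odd(4)] by auto
    moreover have "(\<Sum>J\<in>{J. J \<subseteq> W \<and> PP E u v J}. b_num E J * sa (recE H J) (W - J)) = 0"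
    proof (rule sum.neutral, rule ballI)
      fix J assume J: "J \<in> {J. J \<subseteq> W \<and> PP E u v J}"
      have fJ: "finite J" using J fW finite_subset by auto
      show "b_num E J * sa (recE H J) (W - J) = 0"
      proof (cases "odd (card J)")
        case True
        have "PP E u v J" using J by simp
        then show ?thesis using b_dec_odd[OF fJ _ True] by simp
      next
        case False
        have "card W = card J + card (W - J)" using card_diff_parity[OF fW] J by simp
        then have "odd (card (W - J))" using False odd(4) by simp
        then show ?thesis using sa_odd[of "W - J"] fW by simp
      qed
    qed
    ultimately show ?thesis by simp
  next
    case even
    let ?S = "{J. J \<subseteq> W \<and> PP E u v J}"
    define D where "D I = sa H I - sa E I" for I
    define T where "T I = - (\<Sum>J\<in>{J. J \<subseteq> I \<and> PP E u v J}. b_num E J * sa (recE H J) (I - J))" for I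
    have IH: "D I = T I" if "I \<subset> W" for I
      unfolding D_def T_def
      using less.hyps[OF psubset_card_mono[OF fW that]] that fW finite_subset by auto
    have s1: "(\<Sum>I\<in>Pow W. D I) = - b_num E W"
    proof -
      have "b_num H W = 0" using b_conn_even[OF fW even(3,4)] .
      then show ?thesis unfolding D_def b_num_def by (simp add: sum_subtractf)
    qed
    have s2: "(\<Sum>I\<in>Pow W. T I) = - (\<Sum>J\<in>?S. b_num E J * b_num (recE H J) (W - J))"
    proof -
      have "(\<Sum>I\<in>Pow W. T I) = - (\<Sum>I\<in>Pow W. \<Sum>J\<in>{J. J \<subseteq> I \<and> PP E u v J}. b_num E J * sa (recE H J) (I - J))"
        unfolding T_def by (simp add: sum_negf)
      also have "\<dots> = - (\<Sum>J\<in>?S. b_num E J * (\<Sum>K\<in>Pow (W - J). sa (recE H J) K))"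
        using sum_T[OF fW, where Q="PP E u v" and f="b_num E" and g="\<lambda>J K. sa (recE H J) K"] by simp
      also have "\<dots> = - (\<Sum>J\<in>?S. b_num E J * b_num (recE H J) (W - J))"
        by (simp only: b_num_def)
      finally show ?thesis .
    qed
    have zero: "b_num E J * b_num (recE H J) (W - J) = 0" if J: "J \<in> ?S" "J \<noteq> W" for J
    proof -
      have fJ: "finite J" using J fW finite_subset by auto
      show ?thesis
      proof (cases "odd (card J)")
        case True
        have "PP E u v J" using J by simp
        then show ?thesis using b_dec_odd[OF fJ _ True] by simp
      next
        case False
        have "card W = card J + card (W - J)" using card_diff_parity[OF fW] J by simp
        then have ev: "even (card (W - J))" using False even(4) by simp
        have ne: "W - J \<noteq> {}" using J by auto
        have "connected_graph (recE H J) (W - J)" using recE_conn[OF even(3) _ ne] J by simp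
        then have "b_num (recE H J) (W - J) = 0" using b_conn_even[OF _ _ ev] fW by simp
        then show ?thesis by simp
      qed
    qed
    have s3: "(\<Sum>J\<in>?S. b_num E J * b_num (recE H J) (W - J)) = b_num E W"
    proof (cases "connected_graph E W")
      case True
      then have "b_num E W = 0" using b_conn_even[OF fW _ even(4)] by simp
      moreover have "W \<notin> ?S" using True unfolding PP_def by simp
      moreover have "(\<Sum>J\<in>?S. b_num E J * b_num (recE H J) (W - J)) = 0"
        using zero \<open>W \<notin> ?S\<close> by (intro sum.neutral ballI) blast
      ultimately show ?thesis by simp
    next
      case False
      have WS: "W \<in> ?S" using False even H unfolding PP_def by simp
      have "(\<Sum>J\<in>?S. b_num E J * b_num (recE H J) (W - J)) =
        b_num E W * b_num (recE H W) (W - W) + (\<Sum>J\<in>?S - {W}. b_num E J * b_num (recE H J) (W - J))"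
        using sum.remove[OF fin_S[OF fW] WS, of "\<lambda>J. b_num E J * b_num (recE H J) (W - J)"] by simp
      moreover have "(\<Sum>J\<in>?S - {W}. b_num E J * b_num (recE H J) (W - J)) = 0"
        using zero by (intro sum.neutral ballI) blast
      ultimately show ?thesis by (simp add: b_empty)
    qed
    have "D W + (\<Sum>I\<in>{I. I \<subset> W}. D I) = T W + (\<Sum>I\<in>{I. I \<subset> W}. T I)"
      using s1 s2 s3 sum_Pow_split[OF fW, of D] sum_Pow_split[OF fW, of T] by simp
    moreover have "(\<Sum>I\<in>{I. I \<subset> W}. D I) = (\<Sum>I\<in>{I. I \<subset> W}. T I)"
      using IH by (intro sum.cong) auto
    ultimately have "D W = T W" by simp
    then show ?thesis unfolding D_def T_def .
  qed
qed

definition SP :: "'a set set \<Rightarrow> 'a set \<Rightarrow> bool" where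
  "SP E X \<longleftrightarrow> (even (card X) \<longrightarrow> 0 \<le> (-1::int) ^ (card X div 2) * sa E X) \<and>
     (odd (card X) \<and> connected_graph E X \<longrightarrow> 0 \<le> (-1::int) ^ (card X div 2) * b_num E X)"

lemma div2_add_even: "even a \<or> even b \<Longrightarrow> (a + b) div 2 = a div 2 + b div 2" for a b :: nat
  by presburger

lemma div2_add_odd: "odd a \<Longrightarrow> odd b \<Longrightarrow> (a + b) div 2 = a div 2 + b div 2 + 1" for a b :: nat
  by presburger

lemma sg_add_even: "even a \<or> even b \<Longrightarrow> (-1::int) ^ ((a + b) div 2) = (-1) ^ (a div 2) * (-1) ^ (b div 2)"
  by (simp add: div2_add_even power_add)

lemma sg_add_odd: "odd a \<Longrightarrow> odd b \<Longrightarrow> (-1::int) ^ ((a + b) div 2) = - ((-1) ^ (a div 2) * (-1) ^ (b div 2))"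
  by (simp add: div2_add_odd power_add)

lemma bJ_sign:
  fixes J :: "'a set"
  assumes fJ: "finite J" and P: "PP E u v J"
    and IH: "\<And>E' (X::'a set). finite X \<Longrightarrow> card X < card J \<Longrightarrow> SP E' X"
  shows "0 \<le> - ((-1::int) ^ (card J div 2) * b_num E J)"
proof (cases "odd (card J)")
  case True then show ?thesis using b_dec_odd[OF fJ P True] by simp
next
  case False
  let ?A = "{y. reach E J u y}"
  let ?B = "J - ?A"
  have uA: "u \<in> ?A" and vB: "v \<in> ?B" and sub: "?A \<subseteq> J"
    and cA: "connected_graph E ?A" and cB: "connected_graph E ?B"
    using dec[OF fJ P] by auto
  have fA: "finite ?A" using sub fJ finite_subset by auto
  have fB: "finite ?B" using fJ by simp
  have c: "card J = card ?A + card ?B" using card_diff_parity[OF fJ sub] .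
  have pA: "card ?A > 0" using uA fA card_gt_0_iff by blast
  have pB: "card ?B > 0" using vB fB card_gt_0_iff by blast
  have bJ: "b_num E J = b_num E ?A * b_num E ?B" using b_dec[OF fJ P] .
  show ?thesis
  proof (cases "even (card ?A)")
    case True
    then have "b_num E ?A = 0" using b_conn_even[OF fA cA] by simp
    then show ?thesis using bJ by simp
  next
    case oA: False
    then have oB: "odd (card ?B)" using c False by simp
    have lA: "card ?A < card J" using c pB by simp
    have lB: "card ?B < card J" using c pA by simp
    have sA: "0 \<le> (-1::int) ^ (card ?A div 2) * b_num E ?A"
      using IH[OF fA lA] cA oA unfolding SP_def by simp
    have sB: "0 \<le> (-1::int) ^ (card ?B div 2) * b_num E ?B"
      using IH[OF fB lB] cB oB unfolding SP_def by simp
    have "- ((-1::int) ^ (card J div 2) * b_num E J)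
        = ((-1::int) ^ (card ?A div 2) * b_num E ?A) * ((-1::int) ^ (card ?B div 2) * b_num E ?B)"
      unfolding c bJ sg_add_odd[OF oA oB] by (simp add: algebra_simps)
    then show ?thesis using sA sB by simp
  qed
qed

lemma term_sa:
  fixes W :: "'a set"
  assumes fW: "finite W" and JW: "J \<subseteq> W" and P: "PP E u v J" and ev: "even (card W)"
    and IH: "\<And>E' (X::'a set). finite X \<Longrightarrow> card X < card W \<Longrightarrow> SP E' X"
  shows "0 \<le> (-1::int) ^ (card W div 2) * (- (b_num E J * sa (recE H J) (W - J)))"
proof (cases "odd (card J)")
  case True
  have fJ: "finite J" using fW JW finite_subset by auto
  show ?thesis using b_dec_odd[OF fJ P True] by simp
next
  case False
  have fJ: "finite J" using fW JW finite_subset by auto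
  have c: "card W = card J + card (W - J)" using card_diff_parity[OF fW JW] .
  have uJ: "u \<in> J" using P unfolding PP_def by simp
  have pJ: "card J > 0" using uJ fJ card_gt_0_iff by blast
  have lJ: "card J \<le> card W" using c by simp
  have e2: "even (card (W - J))" using c ev False by simp
  have IH2: "\<And>E' (X::'a set). finite X \<Longrightarrow> card X < card J \<Longrightarrow> SP E' X"
    using IH lJ by simp
  have s1: "0 \<le> - ((-1::int) ^ (card J div 2) * b_num E J)"
    using bJ_sign[OF fJ P IH2] .
  have s2: "0 \<le> (-1::int) ^ (card (W - J) div 2) * sa (recE H J) (W - J)"
    using IH[of "W - J" "recE H J"] fW c pJ e2 unfolding SP_def by simp
  have sg: "(-1::int) ^ (card W div 2) = (-1) ^ (card J div 2) * (-1) ^ (card (W - J) div 2)"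
    using sg_add_even[of "card J" "card (W - J)"] False c by simp
  have "(-1::int) ^ (card W div 2) * (- (b_num E J * sa (recE H J) (W - J)))
     = (- ((-1::int) ^ (card J div 2) * b_num E J)) * ((-1::int) ^ (card (W - J) div 2) * sa (recE H J) (W - J))"
    by (simp add: sg algebra_simps)
  note eq = this
  show ?thesis unfolding eq by (rule mult_nonneg_nonneg[OF s1 s2])
qed

lemma term_b:
  fixes W :: "'a set"
  assumes fW: "finite W" and JW: "J \<subseteq> W" and P: "PP E u v J" and od: "odd (card W)"
    and cH: "connected_graph H W"
    and IH: "\<And>E' (X::'a set). finite X \<Longrightarrow> card X < card W \<Longrightarrow> SP E' X"
  shows "0 \<le> (-1::int) ^ (card W div 2) * (- (b_num E J * b_num (recE H J) (W - J)))"
proof (cases "odd (card J)")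
  case True
  have fJ: "finite J" using fW JW finite_subset by auto
  show ?thesis using b_dec_odd[OF fJ P True] by simp
next
  case False
  have fJ: "finite J" using fW JW finite_subset by auto
  have c: "card W = card J + card (W - J)" using card_diff_parity[OF fW JW] .
  have uJ: "u \<in> J" using P unfolding PP_def by simp
  have pJ: "card J > 0" using uJ fJ card_gt_0_iff by blast
  have lJ: "card J \<le> card W" using c by simp
  have o2: "odd (card (W - J))" using c od False by simp
  have ne: "W - J \<noteq> {}"
  proof
    assume e: "W - J = {}"
    show False using o2 e by (metis card.empty dvd_0_right)
  qed
  have cR: "connected_graph (recE H J) (W - J)" using recE_conn[OF cH JW ne] .
  have IH2: "\<And>E' (X::'a set). finite X \<Longrightarrow> card X < card J \<Longrightarrow> SP E' X"
    using IH lJ by simp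
  have s1: "0 \<le> - ((-1::int) ^ (card J div 2) * b_num E J)"
    using bJ_sign[OF fJ P IH2] .
  have s2: "0 \<le> (-1::int) ^ (card (W - J) div 2) * b_num (recE H J) (W - J)"
    using IH[of "W - J" "recE H J"] fW c pJ o2 cR unfolding SP_def by simp
  have sg: "(-1::int) ^ (card W div 2) = (-1) ^ (card J div 2) * (-1) ^ (card (W - J) div 2)"
    using sg_add_even[of "card J" "card (W - J)"] False c by simp
  have "(-1::int) ^ (card W div 2) * (- (b_num E J * b_num (recE H J) (W - J)))
     = (- ((-1::int) ^ (card J div 2) * b_num E J)) * ((-1::int) ^ (card (W - J) div 2) * b_num (recE H J) (W - J))"
    by (simp add: sg algebra_simps)
  note eq = this
  show ?thesis unfolding eq by (rule mult_nonneg_nonneg[OF s1 s2])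
qed

lemma two_elems:
  assumes "finite W" "2 \<le> card W"
  shows "\<exists>x y. x \<in> W \<and> y \<in> W \<and> x \<noteq> y"
proof -
  have "W \<noteq> {}" using assms by auto
  then obtain x where x: "x \<in> W" by auto
  have "W - {x} \<noteq> {}"
  proof
    assume "W - {x} = {}"
    then have "W \<subseteq> {x}" by auto
    then have "card W \<le> 1" using card_mono[of "{x}" W] by simp
    then show False using assms(2) by simp
  qed
  then obtain y where "y \<in> W - {x}" by auto
  then show ?thesis using x by blast
qed

lemma edge_exists:
  assumes "connected_graph E W" "x \<in> W" "y \<in> W" "x \<noteq> y"
  shows "\<exists>a b. a \<in> W \<and> b \<in> W \<and> a \<noteq> b \<and> {a, b} \<in> E"
proof -
  have "(adj E W)\<^sup>*\<^sup>* x y" using assms unfolding connected_graph_def reach_def by simp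
  then show ?thesis
  proof (rule converse_rtranclpE)
    assume "x = y" then show ?thesis using assms(4) by simp
  next
    fix z assume "adj E W x z"
    then show ?thesis unfolding adj_def by blast
  qed
qed

lemma b_diff:
  assumes H: "H = insert {u, v} E" and uv: "u \<noteq> v" and fW: "finite W"
  shows "b_num H W - b_num E W =
    - (\<Sum>J\<in>{J. J \<subseteq> W \<and> PP E u v J}. b_num E J * b_num (recE H J) (W - J))"
proof -
  have "b_num H W - b_num E W = (\<Sum>I\<in>Pow W. sa H I - sa E I)"
    unfolding b_num_def by (simp add: sum_subtractf)
  also have "\<dots> = (\<Sum>I\<in>Pow W. - (\<Sum>J\<in>{J. J \<subseteq> I \<and> PP E u v J}. b_num E J * sa (recE H J) (I - J)))"
  proof (rule sum.cong)
    fix I assume "I \<in> Pow W"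
    then have "finite I" using fW finite_subset by auto
    then show "sa H I - sa E I = - (\<Sum>J\<in>{J. J \<subseteq> I \<and> PP E u v J}. b_num E J * sa (recE H J) (I - J))"
      using main[OF H uv] by blast
  qed simp
  also have "\<dots> = - (\<Sum>I\<in>Pow W. \<Sum>J\<in>{J. J \<subseteq> I \<and> PP E u v J}. b_num E J * sa (recE H J) (I - J))"
    by (simp add: sum_negf)
  also have "\<dots> = - (\<Sum>J\<in>{J. J \<subseteq> W \<and> PP E u v J}. b_num E J * (\<Sum>K\<in>Pow (W - J). sa (recE H J) K))"
    using sum_T[OF fW, where Q="PP E u v" and f="b_num E" and g="\<lambda>J K. sa (recE H J) K"] by simp
  also have "\<dots> = - (\<Sum>J\<in>{J. J \<subseteq> W \<and> PP E u v J}. b_num E J * b_num (recE H J) (W - J))"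
    by (simp only: b_num_def)
  finally show ?thesis .
qed

lemma sign_step:
  fixes W :: "'a set"
  assumes fW: "finite W"
    and IHn: "\<And>E' (X::'a set). finite X \<Longrightarrow> card X < card W \<Longrightarrow> SP E' X"
  shows "SP E W"
proof (induction "card {e \<in> E. e \<subseteq> W}" arbitrary: E rule: less_induct)
  case less
  have IHm: "SP E' W" if "card {e \<in> E'. e \<subseteq> W} < card {e \<in> E. e \<subseteq> W}" for E'
    using less.hyps that by blast
  have rem: "SP (E - {{a, b}}) W" if "a \<in> W" "b \<in> W" "{a, b} \<in> E" for a b
  proof (rule IHm)
    have f: "finite {e \<in> E. e \<subseteq> W}" by (rule finite_subset[of _ "Pow W"]) (auto simp: fW)
    have "{e \<in> E - {{a, b}}. e \<subseteq> W} \<subset> {e \<in> E. e \<subseteq> W}" using that by auto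
    then show "card {e \<in> E - {{a, b}}. e \<subseteq> W} < card {e \<in> E. e \<subseteq> W}"
      by (rule psubset_card_mono[OF f])
  qed
  show "SP E W" unfolding SP_def
  proof (intro conjI impI)
    assume ev: "even (card W)"
    show "0 \<le> (-1::int) ^ (card W div 2) * sa E W"
    proof (cases "W = {}")
      case True then show ?thesis by (simp add: sa_empty)
    next
      case ne: False
      show ?thesis
      proof (cases "connected_graph E W")
        case False
        obtain A where A: "A \<noteq> {}" "A \<subset> W" "sep E A (W - A)" "connected_graph E A"
          using not_conn_split[OF ne False] by blast
        have fA: "finite A" using A(2) fW finite_subset by auto
        have fB: "finite (W - A)" using fW by simp
        have U: "A \<union> (W - A) = W" using A(2) by auto
        have sp: "sa E W = sa E A * sa E (W - A)"
          using sa_sep[OF fA fB _ A(3)] U by simp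
        have c: "card W = card A + card (W - A)" using card_diff_parity[OF fW] A(2) by auto
        have lA: "card A < card W" using psubset_card_mono[OF fW A(2)] .
        have "card A > 0" using A(1) fA by (simp add: card_gt_0_iff)
        then have lB: "card (W - A) < card W" using c by simp
        show ?thesis
        proof (cases "odd (card A)")
          case True
          then show ?thesis using sp sa_odd[OF fA True] by simp
        next
          case eA: False
          then have eB: "even (card (W - A))" using c ev by simp
          have s1: "0 \<le> (-1::int) ^ (card A div 2) * sa E A" using IHn[OF fA lA] eA unfolding SP_def by simp
          have s2: "0 \<le> (-1::int) ^ (card (W - A) div 2) * sa E (W - A)" using IHn[OF fB lB] eB unfolding SP_def by simp
          have sg: "(-1::int) ^ (card W div 2) = (-1) ^ (card A div 2) * (-1) ^ (card (W - A) div 2)"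
            using sg_add_even[of "card A" "card (W - A)"] eA c by simp
          have eq: "(-1::int) ^ (card W div 2) * sa E W = ((-1) ^ (card A div 2) * sa E A) * ((-1) ^ (card (W - A) div 2) * sa E (W - A))"
            by (simp add: sg sp algebra_simps)
          show ?thesis unfolding eq by (rule mult_nonneg_nonneg[OF s1 s2])
        qed
      next
        case True
        have "card W \<noteq> 0" using ne fW by simp
        then have "2 \<le> card W" using ev by presburger
        then obtain x y where "x \<in> W" "y \<in> W" "x \<noteq> y" using two_elems[OF fW] by blast
        then obtain a b where ab: "a \<in> W" "b \<in> W" "a \<noteq> b" "{a, b} \<in> E" using edge_exists[OF True] by blast
        let ?E' = "E - {{a, b}}"
        have HE: "E = insert {a, b} ?E'" using ab(4) by auto
        have m: "sa E W - sa ?E' W = - (\<Sum>J\<in>{J. J \<subseteq> W \<and> PP ?E' a b J}. b_num ?E' J * sa (recE E J) (W - J))"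
          using main[OF HE ab(3) fW] .
        have s1: "0 \<le> (-1::int) ^ (card W div 2) * sa ?E' W" using rem[OF ab(1,2,4)] ev unfolding SP_def by simp
        have s2: "0 \<le> (\<Sum>J\<in>{J. J \<subseteq> W \<and> PP ?E' a b J}. (-1::int) ^ (card W div 2) * (- (b_num ?E' J * sa (recE E J) (W - J))))"
          using term_sa[OF fW _ _ ev IHn] by (intro sum_nonneg) blast
      have e1: "sa E W = sa ?E' W + - (\<Sum>J\<in>{J. J \<subseteq> W \<and> PP ?E' a b J}. b_num ?E' J * sa (recE E J) (W - J))"
        using m by linarith
      have e2: "(-1::int) ^ (card W div 2) * (- (\<Sum>J\<in>{J. J \<subseteq> W \<and> PP ?E' a b J}. b_num ?E' J * sa (recE E J) (W - J)))
         = (\<Sum>J\<in>{J. J \<subseteq> W \<and> PP ?E' a b J}. (-1::int) ^ (card W div 2) * (- (b_num ?E' J * sa (recE E J) (W - J))))"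
        by (simp add: sum_distrib_left sum_negf)
      have "(-1::int) ^ (card W div 2) * sa E W = (-1::int) ^ (card W div 2) * sa ?E' W +
        (\<Sum>J\<in>{J. J \<subseteq> W \<and> PP ?E' a b J}. (-1::int) ^ (card W div 2) * (- (b_num ?E' J * sa (recE E J) (W - J))))"
        by (subst e1) (simp only: distrib_left e2)
        then show ?thesis using s1 s2 by simp
      qed
    qed
  next
    assume oc: "odd (card W) \<and> connected_graph E W"
    show "0 \<le> (-1::int) ^ (card W div 2) * b_num E W"
    proof (cases "card W = 1")
      case True
      then obtain x where W: "W = {x}" by (rule card_1_singletonE)
      have "sa E {x} = 0" using sa_odd[of "{x}" E] by simp
      moreover have "Pow {x} = {{}, {x}}" by blast
      ultimately have "b_num E W = 1" unfolding W b_num_def by (simp add: sa_empty)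
      then show ?thesis using True by simp
    next
      case False
      have "card W \<noteq> 0" using oc by (metis dvd_0_right)
      then have "2 \<le> card W" using False by presburger
      then obtain x y where "x \<in> W" "y \<in> W" "x \<noteq> y" using two_elems[OF fW] by blast
      then obtain a b where ab: "a \<in> W" "b \<in> W" "a \<noteq> b" "{a, b} \<in> E" using edge_exists[of E W] oc by blast
      let ?E' = "E - {{a, b}}"
      have HE: "E = insert {a, b} ?E'" using ab(4) by auto
      have m: "b_num E W - b_num ?E' W = - (\<Sum>J\<in>{J. J \<subseteq> W \<and> PP ?E' a b J}. b_num ?E' J * b_num (recE E J) (W - J))"
        using b_diff[OF HE ab(3) fW] .
      have s1: "0 \<le> (-1::int) ^ (card W div 2) * b_num ?E' W"
      proof (cases "connected_graph ?E' W")
        case True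
        then show ?thesis using rem[OF ab(1,2,4)] oc unfolding SP_def by simp
      next
        case False
        have "PP ?E' a b W" unfolding PP_def using ab False oc HE by simp
        then show ?thesis using b_dec_odd[OF fW _ ] oc by simp
      qed
      have s2: "0 \<le> (\<Sum>J\<in>{J. J \<subseteq> W \<and> PP ?E' a b J}. (-1::int) ^ (card W div 2) * (- (b_num ?E' J * b_num (recE E J) (W - J))))"
        using term_b[OF fW _ _ _ _ IHn] oc by (intro sum_nonneg) blast
      have e1: "b_num E W = b_num ?E' W + - (\<Sum>J\<in>{J. J \<subseteq> W \<and> PP ?E' a b J}. b_num ?E' J * b_num (recE E J) (W - J))"
        using m by linarith
      have e2: "(-1::int) ^ (card W div 2) * (- (\<Sum>J\<in>{J. J \<subseteq> W \<and> PP ?E' a b J}. b_num ?E' J * b_num (recE E J) (W - J)))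
         = (\<Sum>J\<in>{J. J \<subseteq> W \<and> PP ?E' a b J}. (-1::int) ^ (card W div 2) * (- (b_num ?E' J * b_num (recE E J) (W - J))))"
        by (simp add: sum_distrib_left sum_negf)
      have "(-1::int) ^ (card W div 2) * b_num E W = (-1::int) ^ (card W div 2) * b_num ?E' W +
        (\<Sum>J\<in>{J. J \<subseteq> W \<and> PP ?E' a b J}. (-1::int) ^ (card W div 2) * (- (b_num ?E' J * b_num (recE E J) (W - J))))"
        by (subst e1) (simp only: distrib_left e2)
      then show ?thesis using s1 s2 by simp
    qed
  qed
qed

lemma sign_all: "finite W \<Longrightarrow> SP E W"
proof (induction "card W" arbitrary: W E rule: less_induct)
  case less
  show ?case using sign_step[OF less.prems] less.hyps by blast
qed

lemma abs_sg: "0 \<le> (-1::int) ^ n * x \<Longrightarrow> \<bar>x\<bar> = (-1) ^ n * x"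
  by (cases "even n") auto

lemma evencomp_b:
  assumes fJ: "finite J" and C: "C \<in> components E J" and ev: "even (card C)"
  shows "b_num E J = 0"
proof -
  obtain x where x: "x \<in> J" "C = {y. reach E J x y}" using C unfolding components_def by blast
  have sub: "C \<subseteq> J" using x comp_sub by metis
  have sp: "sep E C (J - C)" using x comp_sep by metis
  have cc: "connected_graph E C" using x comp_conn by metis
  have fC: "finite C" using sub fJ finite_subset by auto
  have U: "C \<union> (J - C) = J" using sub by auto
  have "b_num E J = b_num E C * b_num E (J - C)"
    using b_sep[OF fC _ _ sp] fJ U by (metis Diff_disjoint finite_Diff)
  moreover have "b_num E C = 0" using b_conn_even[OF fC cc ev] .
  ultimately show ?thesis by simp
qed

lemma comp_lift:
  assumes C: "C \<in> components E J" and u: "u \<notin> C" and v: "v \<notin> C"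
  shows "C \<in> components (insert {u, v} E) J"
proof -
  obtain x where x: "x \<in> J" "C = {y. reach E J x y}" using C unfolding components_def by blast
  have "reach E J x y" if r: "reach (insert {u, v} E) J x y" for y
  proof -
    have "(adj (insert {u, v} E) J)\<^sup>*\<^sup>* x y" using r unfolding reach_def by simp
    then show ?thesis
    proof (induction rule: rtranclp_induct)
      case base then show ?case using reach_refl[OF x(1)] .
    next
      case (step z z')
      have a: "adj (insert {u, v} E) J z z'" using step.hyps(2) .
      then have zz: "z \<in> J" "z' \<in> J" "z \<noteq> z'" "{z, z'} \<in> insert {u, v} E" unfolding adj_def by auto
      have zC: "z \<in> C" using step.IH x(2) by simp
      have "{z, z'} \<noteq> {u, v}" using zC u v by (auto simp: doubleton_eq_iff)
      then have "{z, z'} \<in> E" using zz(4) by simp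
      then have "adj E J z z'" using zz unfolding adj_def by simp
      then show ?case using step.IH reach_trans reach_adj by metis
    qed
  qed
  moreover have "reach (insert {u, v} E) J x y" if "reach E J x y" for y
    using reach_mono[of J J E "insert {u, v} E"] that by auto
  ultimately have "{y. reach (insert {u, v} E) J x y} = C" using x(2) by blast
  then show ?thesis unfolding components_def using x(1) by blast
qed

lemma match1:
  assumes fV: "finite V" and J: "J \<subseteq> V" "PP E u v J" and nX: "J \<notin> EC (insert {u, v} E) V - EC E V"
  shows "b_num E J = 0"
proof -
  have fJ: "finite J" using fV J finite_subset by auto
  show ?thesis
  proof (cases "odd (card J)")
    case True then show ?thesis using b_dec_odd[OF fJ J(2)] by simp
  next
    case evJ: False
    let ?A = "{y. reach E J u y}"
    have sub: "?A \<subseteq> J" and cA: "connected_graph E ?A" and uJ: "u \<in> J"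
      using dec[OF fJ J(2)] J(2) unfolding PP_def by auto
    have fA: "finite ?A" using sub fJ finite_subset by auto
    show ?thesis
    proof (cases "even (card ?A)")
      case True
      then have "b_num E ?A = 0" using b_conn_even[OF fA cA] by simp
      then show ?thesis using b_dec[OF fJ J(2)] by simp
    next
      case oA: False
      have cH: "connected_graph (insert {u, v} E) J" using J(2) unfolding PP_def by simp
      have "J \<in> EC (insert {u, v} E) V"
        unfolding EC_def using J(1) conn_components[OF cH] evJ by simp
      moreover have "J \<notin> EC E V"
      proof
        assume "J \<in> EC E V"
        moreover have "?A \<in> components E J" unfolding components_def using uJ by blast
        ultimately show False using oA unfolding EC_def by blast
      qed
      ultimately show ?thesis using nX by simp
    qed
  qed
qed

lemma match2:
  assumes fV: "finite V" and uv: "u \<noteq> v" and X: "J \<in> EC (insert {u, v} E) V - EC E V"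
    and nS: "\<not> PP E u v J"
  shows "b_num E J = 0"
proof (rule ccontr)
  assume nz: "b_num E J \<noteq> 0"
  let ?H = "insert {u, v} E"
  have JV: "J \<subseteq> V" and evH: "\<forall>C\<in>components ?H J. even (card C)"
    using X unfolding EC_def by auto
  obtain C0 where C0: "C0 \<in> components E J" "odd (card C0)" using X JV unfolding EC_def by auto
  have fJ: "finite J" using fV JV finite_subset by auto
  have allodd: "odd (card C)" if "C \<in> components E J" for C
    using evencomp_b[OF fJ that] nz by blast
  have uvJ: "u \<in> J \<and> v \<in> J"
  proof (rule ccontr)
    assume "\<not> (u \<in> J \<and> v \<in> J)"
    then have "adj ?H J = adj E J"
      by (intro ext) (auto simp: adj_def doubleton_eq_iff)
    then have "reach ?H J = reach E J" by (intro ext) (simp add: reach_def)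
    then have "components ?H J = components E J" unfolding components_def by simp
    then show False using evH C0 by auto
  qed
  then have uJ: "u \<in> J" and vJ: "v \<in> J" by auto
  have ncE: "\<not> connected_graph E J"
  proof
    assume cE: "connected_graph E J"
    then have "components E J = {J}" by (rule conn_components)
    then have "C0 = J" using C0 by simp
    have "connected_graph ?H J" using cE reach_mono[of J J E ?H] unfolding connected_graph_def by blast
    then have "components ?H J = {J}" by (rule conn_components)
    then show False using evH C0 \<open>C0 = J\<close> by simp
  qed
  have ruv: "reach ?H J u v" using uJ vJ uv unfolding reach_def adj_def by auto
  have toU: "reach ?H J y u" if y: "y \<in> J" for y
  proof -
    let ?C = "{z. reach E J y z}"
    have Cc: "?C \<in> components E J" unfolding components_def using y by blast
    have "u \<in> ?C \<or> v \<in> ?C"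
    proof (rule ccontr)
      assume "\<not> (u \<in> ?C \<or> v \<in> ?C)"
      then have "?C \<in> components ?H J" using comp_lift[OF Cc] by blast
      then show False using evH allodd[OF Cc] by blast
    qed
    then have "reach E J y u \<or> reach E J y v" by simp
    then have "reach ?H J y u \<or> reach ?H J y v" using reach_mono[of J J E ?H] by blast
    then show ?thesis using ruv reach_sym reach_trans by metis
  qed
  have "connected_graph ?H J"
    unfolding connected_graph_def
  proof (intro conjI ballI)
    show "J \<noteq> {}" using uJ by auto
    fix y z assume "y \<in> J" "z \<in> J"
    then show "reach ?H J y z" using toU reach_sym reach_trans by metis
  qed
  then have "PP E u v J" unfolding PP_def using uJ vJ ncE by simp
  then show False using nS by simp
qed

theorem mainTheorem7:
  fixes V :: "'a set" and E :: "'a set set" and i :: nat and u v :: 'a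
  assumes "simple_graph V E"
    and "card V = 2 * i"
    and "u \<in> V" and "v \<in> V" and "u \<noteq> v"
  shows "a_num (insert {u, v} E) V =
           a_num E V +
           (\<Sum>J \<in> EC (insert {u, v} E) V - EC E V.
              \<bar>b_num E J\<bar> * a_num (recon_edges (insert {u, v} E) V J) (V - J))"
proof -
  let ?H = "insert {u, v} E"
  let ?S = "{J. J \<subseteq> V \<and> PP E u v J}"
  let ?X = "EC ?H V - EC E V"
  let ?sg = "(-1::int) ^ (card V div 2)"
  have fV: "finite V" using assms(1) unfolding simple_graph_def by simp
  have ev: "even (card V)" using assms(2) by simp
  have IHn: "\<And>E' (X::'a set). finite X \<Longrightarrow> card X < card V \<Longrightarrow> SP E' X"
    using sign_all by blast
  have m: "sa ?H V - sa E V = - (\<Sum>J\<in>?S. b_num E J * sa (recE ?H J) (V - J))"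
    using main[OF refl assms(5) fV] .
  have sE: "0 \<le> ?sg * sa E V" using sign_all[OF fV, of E] ev unfolding SP_def by simp
  have tJ: "0 \<le> ?sg * (- (b_num E J * sa (recE ?H J) (V - J)))" if "J \<in> ?S" for J
    using term_sa[OF fV _ _ ev IHn] that by blast
  have e1: "sa ?H V = sa E V + - (\<Sum>J\<in>?S. b_num E J * sa (recE ?H J) (V - J))"
    using m by linarith
  have e2: "?sg * (- (\<Sum>J\<in>?S. b_num E J * sa (recE ?H J) (V - J)))
     = (\<Sum>J\<in>?S. ?sg * (- (b_num E J * sa (recE ?H J) (V - J))))"
    by (simp add: sum_distrib_left sum_negf)
  have e3: "?sg * sa ?H V = ?sg * sa E V + (\<Sum>J\<in>?S. ?sg * (- (b_num E J * sa (recE ?H J) (V - J))))"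
    by (subst e1) (simp only: distrib_left e2)
  have sT: "0 \<le> (\<Sum>J\<in>?S. ?sg * (- (b_num E J * sa (recE ?H J) (V - J))))"
    by (rule sum_nonneg) (rule tJ)
  have sH: "0 \<le> ?sg * sa ?H V" unfolding e3 using add_nonneg_nonneg[OF sE sT] .
  have aH: "a_num ?H V = ?sg * sa ?H V" unfolding a_num_def using abs_sg[OF sH] .
  have aE: "a_num E V = ?sg * sa E V" unfolding a_num_def using abs_sg[OF sE] .
  have tabs: "?sg * (- (b_num E J * sa (recE ?H J) (V - J))) = \<bar>b_num E J\<bar> * \<bar>sa (recE ?H J) (V - J)\<bar>"
    if "J \<in> ?S" for J
    using abs_sg[OF tJ[OF that]] by (simp add: abs_mult)
  have step1: "a_num ?H V = a_num E V + (\<Sum>J\<in>?S. \<bar>b_num E J\<bar> * \<bar>sa (recE ?H J) (V - J)\<bar>)"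
    unfolding aH aE e3 using tabs by simp
  let ?f = "\<lambda>J. \<bar>b_num E J\<bar> * \<bar>sa (recE ?H J) (V - J)\<bar>"
  have fS: "finite ?S" using fin_S[OF fV] .
  have fX: "finite ?X" by (rule finite_subset[of _ "Pow V"]) (auto simp: fV EC_def)
  have "sum ?f (?S \<inter> ?X) = sum ?f ?S"
  proof (rule sum.mono_neutral_left[OF fS])
    show "?S \<inter> ?X \<subseteq> ?S" by blast
    show "\<forall>J\<in>?S - ?S \<inter> ?X. ?f J = 0"
    proof
      fix J assume "J \<in> ?S - ?S \<inter> ?X"
      then have "b_num E J = 0" using match1[OF fV] by blast
      then show "?f J = 0" by simp
    qed
  qed
  moreover have "sum ?f (?S \<inter> ?X) = sum ?f ?X"
  proof (rule sum.mono_neutral_left[OF fX])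
    show "?S \<inter> ?X \<subseteq> ?X" by blast
    show "\<forall>J\<in>?X - ?S \<inter> ?X. ?f J = 0"
    proof
      fix J assume J: "J \<in> ?X - ?S \<inter> ?X"
      then have JV: "J \<subseteq> V" unfolding EC_def by auto
      then have "\<not> PP E u v J" using J by auto
      then have "b_num E J = 0" using match2[OF fV assms(5)] J by blast
      then show "?f J = 0" by simp
    qed
  qed
  moreover have "(\<Sum>J \<in> ?X. \<bar>b_num E J\<bar> * a_num (recon_edges ?H V J) (V - J)) = sum ?f ?X"
    unfolding a_num_def using recon_sa[OF fV] by simp
  ultimately show ?thesis using step1 by simp
qed

end
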